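(* Let $x$ be a real number with $0<x\le 1$. For every integer $k\ge 1$, $$B_{k}(1-x)=(-1)^{k+1}\sum_{n=1}^{k}\left(\frac{1}{n(n+1)}+\frac{x-1}{n^2}\right)\Delta_{n,x}(k),\qquad\text{where}\quad \Delta_{n,x}(k)=\sum_{j=1}^{n}(-1)^{j}\binom{n}{j}\,j\,(j+x-1)^{k-1}.$$
   Context: The Bernoulli polynomials $B_k(x)$ are defined by the generating function $\frac{te^{xt}}{e^{t}-1}=\sum_{k=0}^{\infty}\frac{B_k(x)}{k!}t^k$ for $|t|<2\pi$. Here $0^0$ is interpreted as $1$. *)

theory Defs
  imports Complex_Main "HOL-Computational_Algebra.Formal_Power_Series"
begin

definition bernpoly :: "nat \<Rightarrow> real \<Rightarrow> real" where
  "bernpoly k x = fact k * fps_nth ((fps_X * fps_exp x) / (fps_exp 1 - 1)) k"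

definition Delta :: "nat \<Rightarrow> real \<Rightarrow> nat \<Rightarrow> real" where
  "Delta n x k = (\<Sum>j=1..n. (-1)^j * real (n choose j) * real j * (real j + x - 1)^(k - 1))"

end

theory Submission
  imports Defs
begin

unbundle fps_syntax

definition low :: "nat \<Rightarrow> real fps \<Rightarrow> bool" where
  "low N f \<longleftrightarrow> (\<forall>j<N. f $ j = 0)"

lemma low_mult: assumes "low N f" "low M g" shows "low (N+M) (f*g)"
  unfolding low_def
proof (intro allI impI)
  fix j assume j: "j < N + M"
  have "\<forall>i\<in>{0..j}. f$i * g$(j-i) = 0"
  proof
    fix i assume ij: "i \<in> {0..j}"
    show "f$i * g$(j-i) = 0"
    proof (cases "i < N")
      case True then show ?thesis using assms(1) by (simp add: low_def)
    next
      case False then have "j - i < M" using j ij by auto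
      then show ?thesis using assms(2) by (simp add: low_def)
    qed
  qed
  then show "(f*g) $ j = 0" unfolding fps_mult_nth by (rule sum.neutral)
qed

lemma low_mult_left: "low N g \<Longrightarrow> low N (f*g)"
  using low_mult[of 0 f N g] by (simp add: low_def)

lemma low_add: "low N f \<Longrightarrow> low N g \<Longrightarrow> low N (f+g)"
  by (simp add: low_def)
lemma low_diff: "low N f \<Longrightarrow> low N g \<Longrightarrow> low N (f-g)"
  by (simp add: low_def)
lemma low_mono: "low M f \<Longrightarrow> N \<le> M \<Longrightarrow> low N f"
  by (simp add: low_def)

lemma low_power: "low 1 w \<Longrightarrow> low n (w^n)"
proof (induction n)
  case 0 then show ?case by (simp add: low_def)
next
  case (Suc n) then show ?case using low_mult[of 1 w n "w^n"] by simp
qed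

lemma low_X2: assumes "low (N+2) (fps_X^2 * f)" shows "low N f"
  unfolding low_def
proof (intro allI impI)
  fix j assume "j < N" 
  then have "(fps_X^2 * f) $ (j+2) = 0" using assms by (simp add: low_def)
  then show "f $ j = 0" by (simp add: fps_X_power_mult_nth)
qed

definition ww :: "real fps" where "ww = 1 - fps_exp (-1)"

lemma ww_deriv: "fps_deriv ww = 1 - ww"
  by (simp add: ww_def fps_eq_iff)

lemma ww_low: "low 1 ww"
  by (simp add: low_def ww_def)

definition QQ :: "nat \<Rightarrow> real fps" where
  "QQ N = (\<Sum>n=1..N. fps_const (1 / real n) * ww^n)"

lemma QQ_Suc: "QQ (Suc N) = QQ N + fps_const (1 / real (Suc N)) * ww^(Suc N)"
  by (simp add: QQ_def)

lemma QQ_deriv: "fps_deriv (QQ N - fps_X) = - (ww^N)"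
proof (induction N)
  case 0 then show ?case by (simp add: QQ_def)
next
  case (Suc N)
  have "fps_deriv (QQ (Suc N) - fps_X) = fps_deriv (QQ N - fps_X) +
      fps_const (1 / real (Suc N)) * fps_deriv (ww^(Suc N))"
    by (simp add: QQ_Suc algebra_simps)
  also have "fps_deriv (ww^(Suc N)) = fps_const (real (Suc N)) * (1 - ww) * ww^N"
    by (simp only: fps_deriv_power ww_deriv diff_Suc_1)
  also have "fps_const (1 / real (Suc N)) * (fps_const (real (Suc N)) * (1 - ww) * ww^N)
      = fps_const (1 / real (Suc N) * real (Suc N)) * (1 - ww) * ww^N"
    by (simp only: mult.assoc[symmetric] fps_const_mult)
  also have "1 / real (Suc N) * real (Suc N) = 1" by simp
  finally show ?case using Suc by (simp add: algebra_simps)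
qed

lemma QQ_low: "low (N+1) (QQ N - fps_X)"
  unfolding low_def
proof (intro allI impI)
  fix j assume j: "j < N+1"
  show "(QQ N - fps_X) $ j = 0"
  proof (cases j)
    case 0
    have "ww $ 0 = 0" using ww_low by (simp add: low_def)
    then show ?thesis using 0 by (simp add: QQ_def fps_sum_nth startsby_zero_power)
  next
    case (Suc i)
    have "fps_deriv (QQ N - fps_X) $ i = 0" using QQ_deriv low_power[OF ww_low, of N] Suc j
      by (simp add: low_def)
    then have "of_nat (i+1) * (QQ N - fps_X) $ (i+1) = 0" unfolding fps_deriv_nth .
    then show ?thesis using Suc by (simp del: of_nat_Suc of_nat_add)
  qed
qed
definition SS :: "real \<Rightarrow> nat \<Rightarrow> real fps" where
  "SS y N = (\<Sum>n=1..N. fps_const (1 / real (n+1) + y / real n) * ww^(n-1))"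

lemma SS_eq: "ww^2 * SS y N = (QQ (Suc N) - ww) + fps_const y * ww * QQ N"
proof (induction N)
  case 0 then show ?case by (simp add: SS_def QQ_def)
next
  case (Suc N)
  have c: "fps_const (1 / real (Suc N + 1) + y / real (Suc N))
     = fps_const (1 / real (Suc (Suc N))) + fps_const y * fps_const (1 / real (Suc N))"
    by simp
  have "ww^2 * SS y (Suc N) = ww^2 * SS y N
      + fps_const (1 / real (Suc N + 1) + y / real (Suc N)) * ww^(Suc (Suc N))"
    by (simp add: SS_def algebra_simps power2_eq_square)
  also have "\<dots> = (QQ (Suc (Suc N)) - ww) + fps_const y * ww * QQ (Suc N)"
    unfolding Suc c QQ_Suc[of "Suc N"] QQ_Suc[of N]
    by (simp add: algebra_simps del: fps_const_add fps_const_mult)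
  finally show ?case .
qed

lemma G_eq:
  fixes x :: real
  defines "F \<equiv> (fps_X * fps_exp (1-x)) / (fps_exp 1 - 1)"
  shows "fps_exp x * ww^2 * fps_deriv F = ww - fps_X - fps_const (x-1) * fps_X * ww"
proof -
  define D :: "real fps" where "D = fps_exp 1 - 1"
  define D1 :: "real fps" where "D1 = Abs_fps (\<lambda>n. D $ (n+1))"
  have D0: "D $ 0 = 0" by (simp add: D_def)
  have DX: "D = fps_X * D1" by (rule fps_ext) (simp add: D1_def D0)
  have D10: "D1 $ 0 = 1" by (simp add: D1_def D_def)
  have "F = (fps_exp (1-x) * fps_X) / (D1 * fps_X)"
    unfolding F_def D_def[symmetric] DX by (simp add: mult.commute)
  also have "\<dots> = fps_exp (1-x) / D1" by (rule fps_divide_cancel) simp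
  also have "\<dots> = fps_exp (1-x) * inverse D1" using D10 by (simp add: fps_divide_unit)
  finally have Fe: "F = fps_exp (1-x) * inverse D1" .
  have DF: "D * F = fps_X * fps_exp (1-x)"
    unfolding Fe DX using inverse_mult_eq_1'[of D1] D10 by (simp add: algebra_simps)
  have "fps_deriv (D * F) = fps_deriv (fps_X * fps_exp (1-x))" using DF by simp
  then have dDF: "D * fps_deriv F + fps_exp 1 * F = fps_X * fps_const (1-x) * fps_exp (1-x) + fps_exp (1-x)"
    by (simp add: D_def algebra_simps)
  have e1: "fps_exp 1 * fps_exp (-1) = (1::real fps)" by (simp add: fps_exp_add_mult[symmetric])
  have exz: "fps_exp x * fps_exp (-1) * fps_exp (-1) * fps_exp (1-x) = fps_exp (-1::real)"
    by (simp add: fps_exp_add_mult[symmetric])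
  have ex3: "fps_exp x * fps_exp (-1) * fps_exp (-1) * fps_exp 1 * fps_exp (1-x) = (1::real fps)"
    by (simp add: fps_exp_add_mult[symmetric])
  have wwD: "ww = D * fps_exp (-1)" unfolding ww_def D_def using e1 by (simp add: algebra_simps)
  define G where "G = fps_deriv F"
  define c where "c = fps_const (1-x)"
  have dG: "D * G = fps_X * c * fps_exp (1-x) + fps_exp (1-x) - fps_exp 1 * F"
    using dDF unfolding G_def c_def by (simp add: algebra_simps)
  have "fps_exp x * ww^2 * G = (fps_exp x * fps_exp (-1) * fps_exp (-1)) * D * (D * G)"
    unfolding wwD by (simp add: power2_eq_square algebra_simps)
  also have "\<dots> = (fps_exp x * fps_exp (-1) * fps_exp (-1) * fps_exp (1-x)) * D * (fps_X * c + 1)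
      - (fps_exp x * fps_exp (-1) * fps_exp (-1) * fps_exp 1) * (D * F)"
    unfolding dG by (simp add: algebra_simps)
  also have "\<dots> = fps_exp (-1) * D * (fps_X * c + 1)
      - (fps_exp x * fps_exp (-1) * fps_exp (-1) * fps_exp 1 * fps_exp (1-x)) * fps_X"
    unfolding exz DF by (simp add: algebra_simps)
  also have "\<dots> = ww * (fps_X * c + 1) - fps_X"
    unfolding ex3 wwD by (simp add: algebra_simps)
  finally have fin: "fps_exp x * ww^2 * G = ww * (fps_X * c + 1) - fps_X" .
  have h: "c = - fps_const (x-1)" unfolding c_def by simp
  show ?thesis using fin unfolding G_def h
    by (simp add: algebra_simps del: fps_const_neg fps_const_sub)
qed

lemma T_low:
  fixes x :: real and N :: nat
  defines "F \<equiv> (fps_X * fps_exp (1-x)) / (fps_exp 1 - 1)"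
  shows "low N (fps_deriv F + fps_exp (-x) * SS (x-1) N)"
proof -
  define T where "T = fps_deriv F + fps_exp (-x) * SS (x-1) N"
  have exx: "fps_exp x * fps_exp (-x) = (1::real fps)" by (simp add: fps_exp_add_mult[symmetric])
  have "fps_exp x * ww^2 * T = fps_exp x * ww^2 * fps_deriv F
      + (fps_exp x * fps_exp (-x)) * (ww^2 * SS (x-1) N)"
    unfolding T_def by (simp add: algebra_simps)
  also have "\<dots> = (QQ (Suc N) - fps_X) + fps_const (x-1) * (ww * (QQ N - fps_X))"
    unfolding exx SS_eq G_eq[of x, folded F_def] by (simp add: algebra_simps)
  finally have eq: "fps_exp x * ww^2 * T = (QQ (Suc N) - fps_X) + fps_const (x-1) * (ww * (QQ N - fps_X))" .
  have "low (N+2) ((QQ (Suc N) - fps_X) + fps_const (x-1) * (ww * (QQ N - fps_X)))"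
  proof (rule low_add)
    show "low (N+2) (QQ (Suc N) - fps_X)" using QQ_low[of "Suc N"] by simp
    show "low (N+2) (fps_const (x-1) * (ww * (QQ N - fps_X)))"
      using low_mult_left[OF low_mult[OF ww_low QQ_low[of N]], of "fps_const (x-1)"] by simp
  qed
  then have l2: "low (N+2) (fps_exp x * ww^2 * T)" unfolding eq .
  define W1 :: "real fps" where "W1 = Abs_fps (\<lambda>n. ww $ (n+1))"
  have w0: "ww $ 0 = 0" by (simp add: ww_def)
  have wX: "ww = fps_X * W1" by (rule fps_ext) (simp add: W1_def w0)
  have W10: "W1 $ 0 = 1" by (simp add: W1_def ww_def)
  define U where "U = fps_exp x * W1^2"
  have U0: "U $ 0 = 1" by (simp add: U_def W10 fps_power_zeroth)
  have "fps_exp x * ww^2 * T = fps_X^2 * (U * T)"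
    unfolding U_def wX by (simp add: algebra_simps power2_eq_square)
  with l2 have "low N (U * T)" using low_X2 by simp
  then have "low N (inverse U * (U * T))" by (rule low_mult_left)
  also have "inverse U * (U * T) = T"
    using inverse_mult_eq_1[of U] U0 by (simp add: mult.assoc[symmetric])
  finally show ?thesis unfolding T_def .
qed

lemma ww_power: "ww^m = (\<Sum>i\<le>m. fps_const (real (m choose i) * (-1)^i) * fps_exp (- real i))"
proof -
  have "ww^m = (- fps_exp (-1) + 1)^m" unfolding ww_def by simp
  also have "\<dots> = (\<Sum>i\<le>m. of_nat (m choose i) * (- fps_exp (-1))^i * 1^(m-i))"
    by (rule binomial_ring)
  also have "\<dots> = (\<Sum>i\<le>m. fps_const (real (m choose i) * (-1)^i) * fps_exp (- real i))"
  proof (rule sum.cong[OF refl])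
    fix i
    have c: "(of_nat (m choose i) :: real fps) = fps_const (real (m choose i))" by (simp add: fps_of_nat)
    have m1: "(-1::real fps) = fps_const (-1)" by (simp add: fps_eq_iff)
    have m2: "(-1::real fps)^i = fps_const ((-1)^i)" by (simp only: m1 fps_const_power)
    have e: "of_nat i * (-1::real) = - real i" by simp
    have ex: "(- fps_exp (-1::real))^i = fps_const ((-1)^i) * fps_exp (- real i)"
      by (simp only: power_minus[of "fps_exp (-1::real)"] m2 fps_exp_power_mult e)
    then show "of_nat (m choose i) * (- fps_exp (-1))^i * 1^(m-i) =
      fps_const (real (m choose i) * (-1)^i) * fps_exp (- real i)"
      by (simp only: c ex power_one mult_1_right mult.assoc[symmetric] fps_const_mult)
  qed
  finally show ?thesis .
qed

lemma coeff_ww: "(fps_exp (-x) * ww^m) $ p =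
   (\<Sum>i=0..m. real (m choose i) * (-1)^i * (-(x + real i))^p) / fact p"
proof -
  have "fps_exp (-x) * ww^m = (\<Sum>i\<le>m. fps_const (real (m choose i) * (-1)^i) * fps_exp (-(x + real i)))"
    unfolding ww_power sum_distrib_left
    by (rule sum.cong[OF refl]) (simp add: fps_exp_add_mult[symmetric] algebra_simps)
  then show ?thesis
    by (simp add: fps_sum_nth atMost_atLeast0 sum_divide_distrib)
qed

lemma l1: "(a::real) > 0 \<Longrightarrow> 1/(a*(a+1))*a = 1/(a+1)" by simp
lemma l2: "(a::real) > 0 \<Longrightarrow> (x-1)/a^2*a = (x-1)/a" by (simp add: power2_eq_square)

lemma aux:
  fixes a b c d s z :: real
  assumes "a*b = c*d" shows "(-s)*a*b*z = -c*(s*d*z)"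
proof -
  have "(-s)*a*b*z = -(a*b)*s*z" by (simp add: algebra_simps)
  also have "\<dots> = -(c*d)*s*z" using assms by simp
  also have "\<dots> = -c*(s*d*z)" by (simp add: algebra_simps)
  finally show ?thesis .
qed

lemma Delta_eq:
  assumes "n \<ge> 1"
  shows "Delta n x k = - real n * (\<Sum>i=0..n-1. (-1)^i * real (n-1 choose i) * (real i + x)^(k-1))"
proof -
  obtain m where n: "n = Suc m" using assms by (cases n) auto
  have "Delta n x k = (\<Sum>i=0..m. (-1)^(Suc i) * real (Suc m choose Suc i) * real (Suc i) * (real (Suc i) + x - 1)^(k-1))"
    unfolding Delta_def n by (subst sum.shift_bounds_cl_Suc_ivl[symmetric]) simp
  also have "\<dots> = (\<Sum>i=0..m. - real n * ((-1)^i * real (m choose i) * (real i + x)^(k-1)))"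
  proof (rule sum.cong[OF refl])
    fix i
    have "real (Suc m choose Suc i) * real (Suc i) = real (Suc m) * real (m choose i)"
      using Suc_times_binomial[of i m] by (metis mult.commute of_nat_mult)
    note key = this
    have z: "real (Suc i) + x - 1 = real i + x" by simp
    have p: "(-1::real)^(Suc i) = - ((-1)^i)" by simp
    show "(-1)^(Suc i) * real (Suc m choose Suc i) * real (Suc i) * (real (Suc i) + x - 1)^(k-1)
      = - real n * ((-1)^i * real (m choose i) * (real i + x)^(k-1))"
      unfolding z n p by (rule aux[OF key])
  qed
  finally show ?thesis by (simp add: n sum_distrib_left)
qed

theorem mainTheorem3:
  fixes x :: real and k :: nat
  assumes "0 < x" and "x \<le> 1" and "k \<ge> 1"
  shows "bernpoly k (1 - x) =
    (-1)^(k+1) * (\<Sum>n=1..k. (1 / (real n * (real n + 1)) + (x - 1) / (real n)^2) * Delta n x k)"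
proof -
  define F :: "real fps" where "F = (fps_X * fps_exp (1-x)) / (fps_exp 1 - 1)"
  obtain m where k: "k = Suc m" using assms(3) by (cases k) auto
  define A where "A n = (\<Sum>i=0..n-1. (-1)^i * real (n-1 choose i) * (real i + x)^m)" for n
  have b: "bernpoly k (1-x) = fact k * F $ k" unfolding bernpoly_def F_def by simp
  have T: "(fps_deriv F + fps_exp (-x) * SS (x-1) k) $ m = 0"
    using T_low[of k x] k unfolding low_def F_def by simp
  have d: "fps_deriv F $ m = real k * F $ k" using k by simp
  have co: "(fps_exp (-x) * ww^(n-1)) $ m = (-1)^m * A n / fact m" for n
  proof -
    have "(fps_exp (-x) * ww^(n-1)) $ m =
       (\<Sum>i=0..n-1. real (n-1 choose i) * (-1)^i * (-(x + real i))^m) / fact m"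
      by (rule coeff_ww)
    also have "(\<Sum>i=0..n-1. real (n-1 choose i) * (-1)^i * (-(x + real i))^m)
        = (-1)^m * A n"
      unfolding A_def sum_distrib_left
    proof (rule sum.cong[OF refl])
      fix i
      have pm: "(-(x + real i))^m = (-1)^m * (real i + x)^m" by (simp add: power_minus[symmetric] add.commute)
      show "real (n-1 choose i) * (-1)^i * (-(x + real i))^m =
        (-1)^m * ((-1)^i * real (n-1 choose i) * (real i + x)^m)"
        unfolding pm by (simp only: ac_simps)
    qed
    finally show ?thesis .
  qed
  have S: "(fps_exp (-x) * SS (x-1) k) $ m =
      (\<Sum>n=1..k. (1 / real (n+1) + (x-1) / real n) * ((-1)^m * A n / fact m))"
    unfolding SS_def sum_distrib_left fps_sum_nth
  proof (rule sum.cong[OF refl])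
    fix n
    have "fps_exp (-x) * (fps_const (1 / real (n+1) + (x-1) / real n) * ww^(n-1))
      = fps_const (1 / real (n+1) + (x-1) / real n) * (fps_exp (-x) * ww^(n-1))"
      by (simp only: mult.left_commute)
    then show "(fps_exp (-x) * (fps_const (1 / real (n+1) + (x-1) / real n) * ww^(n-1))) $ m
      = (1 / real (n+1) + (x-1) / real n) * ((-1)^m * A n / fact m)"
      by (simp only: fps_mult_left_const_nth co)
  qed
  have "bernpoly k (1-x) = fact m * (real k * F $ k)"
    unfolding b by (simp add: k)
  also have "\<dots> = - fact m * (fps_exp (-x) * SS (x-1) k) $ m"
  proof -
    have "real k * F $ k = - (fps_exp (-x) * SS (x-1) k) $ m" using T d by simp
    then show ?thesis by simp
  qed
  also have "\<dots> = (\<Sum>n=1..k. (- ((-1::real)^m)) * ((1 / real (n+1) + (x-1) / real n) * A n))"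
    unfolding S sum_distrib_left by (rule sum.cong[OF refl]) simp
  also have "\<dots> = (-1)^(k+1) * (\<Sum>n=1..k. (1 / (real n * (real n + 1)) + (x - 1) / (real n)^2) * Delta n x k)"
    unfolding sum_distrib_left
  proof (rule sum.cong[OF refl])
    fix n assume "n \<in> {1..k}"
    then have n: "n \<ge> 1" by simp
    have dl: "Delta n x k = - real n * A n" unfolding Delta_eq[OF n] A_def k by simp
    have np: "real n > 0" using n by simp
    have e: "real (n+1) = real n + 1" by simp
    define c where "c = 1 / (real n * (real n + 1)) + (x - 1) / (real n)^2"
    have hb: "c * real n = 1 / real (n+1) + (x-1) / real n"
      unfolding c_def e distrib_right using l1[OF np] l2[OF np, of x] by simp
    have pk: "(-1::real)^(k+1) = (-1)^m" unfolding k by simp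
    have "(-1)^(k+1) * (c * Delta n x k) = - ((-1)^m * ((c * real n) * A n))"
      unfolding dl pk by (simp add: algebra_simps)
    then have "(-1)^(k+1) * (c * Delta n x k) = (- ((-1::real)^m)) * ((1/real(n+1) + (x-1)/real n) * A n)"
      unfolding hb minus_mult_left .
    then show "(- ((-1::real)^m)) * ((1 / real (n+1) + (x-1) / real n) * A n) =
      (-1)^(k+1) * ((1 / (real n * (real n + 1)) + (x - 1) / (real n)^2) * Delta n x k)"
      unfolding c_def by (rule sym)
  qed
  finally show ?thesis .
qed

end
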